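(* For every integer $n\ge 1$, the polytope $\overline{Q}_n=\sum_{S\in\mathcal{I}_n}\Delta_S\subseteq\mathbb{R}^{n+1}$ is simple and $n$-dimensional.
   Context: The sum is a Minkowski sum. $\mathcal{I}_n=\{S\cup\{n+1\} : S\subseteq[n],\ |S|\in\{1,2\}\}$, and for $S\subseteq[n+1]$, $\Delta_S=\mathrm{conv}\{e_i: i\in S\}$ with $e_i$ the standard basis vectors of $\mathbb{R}^{n+1}$. A $d$-dimensional polytope is simple if each vertex lies in exactly $d$ facets. *)

theory Defs
  imports "HOL-Analysis.Analysis"
begin

text \<open>Ambient space R^(n+1) is modelled as real^'m with CARD('m) = n+1; the
distinguished coordinate "n+1" is an arbitrary fixed index j :: 'm.\<close>

definition simplexS :: "'m::finite set \<Rightarrow> (real^'m) set" where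
  "simplexS S = convex hull {axis i 1 | i. i \<in> S}"

definition index_family :: "'m::finite \<Rightarrow> 'm set set" where
  "index_family j = {insert j S | S. S \<subseteq> UNIV - {j} \<and> card S \<in> {1, 2}}"

definition minkowski_sum :: "'i set \<Rightarrow> ('i \<Rightarrow> 'a::ab_group_add set) \<Rightarrow> 'a set" where
  "minkowski_sum I A = {(\<Sum>S\<in>I. f S) | f. \<forall>S\<in>I. f S \<in> A S}"

definition Qbar :: "'m::finite \<Rightarrow> (real^'m) set" where
  "Qbar j = minkowski_sum (index_family j) simplexS"

definition simple_polytope :: "'a::euclidean_space set \<Rightarrow> bool" where
  "simple_polytope P \<longleftrightarrow> polytope P \<and>
     (\<forall>v. {v} face_of P \<longrightarrow> card {F. F facet_of P \<and> v \<in> F} = nat (aff_dim P))"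

end

theory Submission
  imports Defs
begin


locale qb =
  fixes j :: "'m::finite" and n :: nat
  assumes cardm: "CARD('m) = n + 1" and n1: "n \<ge> 1"
begin

definition J :: "'m set" where "J = UNIV - {j}"
definition f :: "nat \<Rightarrow> real" where "f b = real b * (2 * real n + 1 - real b) / 2"
definition ones :: "real^'m" where "ones = (\<chi> k. 1)"
definition ind :: "'m set \<Rightarrow> real^'m" where "ind B = (\<chi> k. if k \<in> B then 1 else 0)"
definition Cs :: "('m + 'm set) set" where
  "Cs = Inl ` J \<union> Inr ` {B. B \<subseteq> J \<and> B \<noteq> {}}"
definition A :: "('m + 'm set) \<Rightarrow> real^'m" where
  "A c = (case c of Inl i \<Rightarrow> - axis i 1 | Inr B \<Rightarrow> ind B)"
definition \<beta> :: "('m + 'm set) \<Rightarrow> real" where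
  "\<beta> c = (case c of Inl i \<Rightarrow> 0 | Inr B \<Rightarrow> f (card B))"
definition H :: "(real^'m) set" where
  "H = {x. ones \<bullet> x = f n \<and> (\<forall>c\<in>Cs. A c \<bullet> x \<le> \<beta> c)}"

lemma cardJ: "card J = n" using cardm by (simp add: J_def card_Diff_singleton)
lemma finJ[simp]: "finite J" by (simp add: J_def)
lemma jJ[simp]: "j \<notin> J" by (simp add: J_def)
lemma inJ: "i \<in> J \<longleftrightarrow> i \<noteq> j" by (simp add: J_def)

lemma A_Inl[simp]: "A (Inl i) \<bullet> x = - x$i"
  by (simp add: A_def inner_axis' )
lemma A_Inr[simp]: "A (Inr B) \<bullet> x = (\<Sum>k\<in>B. x$k)"
proof -
  have "A (Inr B) \<bullet> x = (\<Sum>k\<in>UNIV. if k \<in> B then x$k else 0)"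
    unfolding A_def ind_def inner_vec_def by (intro sum.cong) auto
  also have "\<dots> = (\<Sum>k\<in>B. x$k)" by (rule sum.mono_neutral_cong_right) auto
  finally show ?thesis .
qed
lemma ones_inner[simp]: "ones \<bullet> x = (\<Sum>k\<in>UNIV. x$k)"
  by (simp add: ones_def inner_vec_def)
lemma beta_simps[simp]: "\<beta> (Inl i) = 0" "\<beta> (Inr B) = f (card B)"
  by (auto simp: \<beta>_def)
lemma finCs[simp]: "finite Cs" by (simp add: Cs_def)

lemma H_iff: "x \<in> H \<longleftrightarrow> (\<Sum>k\<in>UNIV. x$k) = f n \<and> (\<forall>i\<in>J. 0 \<le> x$i) \<and>
   (\<forall>B. B \<subseteq> J \<and> B \<noteq> {} \<longrightarrow> (\<Sum>k\<in>B. x$k) \<le> f (card B))" (is "_ \<longleftrightarrow> ?R")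
proof
  assume "x \<in> H"
  hence s: "ones \<bullet> x = f n" and c: "\<And>c. c\<in>Cs \<Longrightarrow> A c \<bullet> x \<le> \<beta> c" by (auto simp: H_def)
  have "0 \<le> x$i" if "i\<in>J" for i using c[of "Inl i"] that by (simp add: Cs_def)
  moreover have "(\<Sum>k\<in>B. x$k) \<le> f (card B)" if "B \<subseteq> J" "B \<noteq> {}" for B
    using c[of "Inr B"] that by (simp add: Cs_def)
  ultimately show ?R using s by simp
next
  assume R: ?R
  have "A c \<bullet> x \<le> \<beta> c" if c: "c \<in> Cs" for c
  proof (cases c)
    case (Inl i) thus ?thesis using c R by (auto simp: Cs_def)
  next
    case (Inr B) thus ?thesis using c R by (auto simp: Cs_def)
  qed
  thus "x \<in> H" using R by (simp add: H_def)
qed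

lemma H_le: "x \<in> H \<Longrightarrow> B \<subseteq> J \<Longrightarrow> B \<noteq> {} \<Longrightarrow> (\<Sum>k\<in>B. x$k) \<le> f (card B)"
  by (simp add: H_iff)
lemma H_nonneg: "x \<in> H \<Longrightarrow> i \<in> J \<Longrightarrow> 0 \<le> x$i"
  by (simp add: H_iff)
lemma H_sum: "x \<in> H \<Longrightarrow> (\<Sum>k\<in>UNIV. x$k) = f n"
  by (simp add: H_iff)

lemma f0[simp]: "f 0 = 0" by (simp add: f_def)
lemma f2: "2 * f b = real b * (2 * real n + 1 - real b)" by (simp add: f_def)
lemma f_Suc: "f (Suc b) = f b + real n - real b" by (simp add: f_def field_simps)
lemma f_diff: "2 * f b - 2 * f a = (real b - real a) * (2 * real n + 1 - real a - real b)"
  unfolding f2 by algebra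
lemma f_mono: assumes "a \<le> b" "b \<le> n" shows "f a \<le> f b"
proof -
  have "0 \<le> (real b - real a) * (2 * real n + 1 - real a - real b)"
    using assms by (intro mult_nonneg_nonneg) auto
  thus ?thesis using f_diff[of b a] by linarith
qed
lemma f_strict: assumes "a < b" "b \<le> n" shows "f a + 1 \<le> f b"
proof -
  have h1: "1 \<le> real b - real a" using assms by auto
  have h2: "2 \<le> 2 * real n + 1 - real a - real b" using assms by auto
  have "1 * 2 \<le> (real b - real a) * (2 * real n + 1 - real a - real b)"
    using h1 h2 by (intro mult_mono) auto
  thus ?thesis using f_diff[of b a] by linarith
qed
lemma f_ge: assumes "b \<le> n" shows "real b \<le> f b"
proof -
  have "real b * 2 \<le> real b * (2 * real n + 1 - real b)"
    using assms n1 by (intro mult_left_mono) auto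
  thus ?thesis using f2[of b] by linarith
qed
lemma f_nonneg: "b \<le> n \<Longrightarrow> 0 \<le> f b" using f_ge[of b] by linarith
lemma f_sub: assumes "w < b" "w < c" "u + w = b + c" shows "f u + f w < f b + f c"
proof -
  have "real u + real w = real b + real c" using assms(3) by (metis of_nat_add)
  hence hu: "real u = real b + real c - real w" by linarith
  have e: "2 * f b + 2 * f c - 2 * f u - 2 * f w = 2 * ((real b - real w) * (real c - real w))"
    unfolding f2 hu by algebra
  have "0 < (real b - real w) * (real c - real w)" using assms by (intro mult_pos_pos) auto
  thus ?thesis using e by linarith
qed

definition T :: "real^'m \<Rightarrow> 'm set set" where
  "T x = {B. B \<subseteq> J \<and> B \<noteq> {} \<and> (\<Sum>k\<in>B. x$k) = f (card B)}"
definition Z :: "real^'m \<Rightarrow> 'm set" where "Z x = {i\<in>J. x$i = 0}"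
definition Tc :: "real^'m \<Rightarrow> ('m + 'm set) set" where "Tc x = {c\<in>Cs. A c \<bullet> x = \<beta> c}"

lemma Tc_eq: "Tc x = Inl ` Z x \<union> Inr ` T x"
  by (auto simp: Tc_def Cs_def Z_def T_def)
lemma finite_T[simp]: "finite (T x)"
  by (rule finite_subset[of _ "Pow J"]) (auto simp: T_def)
lemma finite_Z[simp]: "finite (Z x)" by (simp add: Z_def)
lemma card_Tc: "card (Tc x) = card (Z x) + card (T x)"
  unfolding Tc_eq by (subst card_Un_disjoint) (auto simp: card_image)
lemma T_sub: "B \<in> T x \<Longrightarrow> B \<subseteq> J" by (simp add: T_def)
lemma UT_sub: "\<Union>(T x) \<subseteq> J" by (auto simp: T_def)
lemma finsub: "B \<subseteq> J \<Longrightarrow> finite B" using finite_subset finJ by blast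
lemma card_le_n: "B \<subseteq> J \<Longrightarrow> card B \<le> n" using card_mono[OF finJ] cardJ by metis

lemma P1: assumes "x \<in> H" "B \<in> T x" "i \<in> B" shows "1 \<le> x$i"
proof -
  have BJ: "B \<subseteq> J" and Bne: "B \<noteq> {}" and sB: "(\<Sum>k\<in>B. x$k) = f (card B)"
    using assms(2) by (auto simp: T_def)
  have finB: "finite B" using BJ by (rule finsub)
  have cB: "card B \<le> n" using card_le_n[OF BJ] .
  show ?thesis
  proof (cases "B - {i} = {}")
    case True
    hence "B = {i}" using assms(3) by auto
    hence "x$i = f 1" using sB by simp
    thus ?thesis using f_ge[of 1] n1 by simp
  next
    case False
    have cd: "card (B - {i}) = card B - 1" using assms(3) finB by simp
    have "(\<Sum>k\<in>B - {i}. x$k) \<le> f (card B - 1)"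
      using H_le[OF assms(1), of "B - {i}"] False BJ cd by auto
    moreover have "(\<Sum>k\<in>B. x$k) = x$i + (\<Sum>k\<in>B - {i}. x$k)"
      using assms(3) finB by (simp add: sum.remove)
    moreover have "f (card B - 1) + 1 \<le> f (card B)"
    proof -
      have "0 < card B" using finB assms(3) card_gt_0_iff by blast
      thus ?thesis using cB f_strict[of "card B - 1" "card B"] by simp
    qed
    ultimately show ?thesis using sB by linarith
  qed
qed

lemma P2: assumes "x \<in> H" "B \<in> T x" "C \<in> T x" shows "B \<subseteq> C \<or> C \<subseteq> B"
proof (rule ccontr)
  assume nc: "\<not> (B \<subseteq> C \<or> C \<subseteq> B)"
  have BJ: "B \<subseteq> J" "B \<noteq> {}" "(\<Sum>k\<in>B. x$k) = f (card B)"
    using assms(2) by (auto simp: T_def)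
  have CJ: "C \<subseteq> J" "C \<noteq> {}" "(\<Sum>k\<in>C. x$k) = f (card C)"
    using assms(3) by (auto simp: T_def)
  have finB: "finite B" "finite C" using finsub BJ CJ by blast+
  have su: "(\<Sum>k\<in>B \<union> C. x$k) + (\<Sum>k\<in>B \<inter> C. x$k) = (\<Sum>k\<in>B. x$k) + (\<Sum>k\<in>C. x$k)"
    using finB by (rule sum.union_inter)
  have cu: "card B + card C = card (B \<union> C) + card (B \<inter> C)"
    using finB by (rule card_Un_Int)
  have l1: "(\<Sum>k\<in>B \<union> C. x$k) \<le> f (card (B \<union> C))"
    using assms(1) BJ CJ by (intro H_le) auto
  have l2: "(\<Sum>k\<in>B \<inter> C. x$k) \<le> f (card (B \<inter> C))"
  proof (cases "B \<inter> C = {}")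
    case True thus ?thesis by simp
  next
    case False thus ?thesis using assms(1) BJ by (intro H_le) auto
  qed
  have "card (B \<inter> C) < card B" using nc finB by (intro psubset_card_mono) auto
  moreover have "card (B \<inter> C) < card C" using nc finB by (intro psubset_card_mono) auto
  ultimately have "f (card (B \<union> C)) + f (card (B \<inter> C)) < f (card B) + f (card C)"
    using cu by (intro f_sub) auto
  thus False using su l1 l2 BJ CJ by linarith
qed

lemma P3: assumes "x \<in> H" shows "card (T x) \<le> card (\<Union>(T x))"
proof -
  have inj: "inj_on card (T x)"
  proof (rule inj_onI)
    fix B C assume B: "B \<in> T x" and C: "C \<in> T x" and e: "card B = card C"
    have fin: "finite B" "finite C" using T_sub[OF B] T_sub[OF C] finsub by blast+
    from P2[OF assms B C] show "B = C"
      using e fin card_subset_eq by metis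
  qed
  have "card ` T x \<subseteq> {1..card (\<Union>(T x))}"
  proof
    fix k assume "k \<in> card ` T x"
    then obtain B where B: "B \<in> T x" "k = card B" by auto
    have fin: "finite B" "B \<noteq> {}" using finsub[OF T_sub[OF B(1)]] B(1) by (auto simp: T_def)
    have "finite (\<Union>(T x))" using finsub[OF UT_sub] .
    hence "card B \<le> card (\<Union>(T x))" using B(1) by (intro card_mono) auto
    thus "k \<in> {1..card (\<Union>(T x))}" using B fin by (auto simp: Suc_le_eq card_gt_0_iff)
  qed
  hence "card (card ` T x) \<le> card {1..card (\<Union>(T x))}" by (intro card_mono) auto
  thus ?thesis using card_image[OF inj] by simp
qed

lemma ZU: "x \<in> H \<Longrightarrow> Z x \<inter> \<Union>(T x) = {}"
  using P1 by (fastforce simp: Z_def)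

lemma Tc_le: assumes "x \<in> H" shows "card (Tc x) \<le> n"
proof -
  have "card (Z x) + card (\<Union>(T x)) = card (Z x \<union> \<Union>(T x))"
    using ZU[OF assms] finsub[OF UT_sub]
    by (intro card_Un_disjoint[symmetric]) auto
  also have "\<dots> \<le> n" using UT_sub[of x] by (intro card_le_n) (auto simp: Z_def)
  finally show ?thesis using P3[OF assms] card_Tc[of x] by linarith
qed

lemma perturb:
  assumes x: "x \<in> H" and d0: "ones \<bullet> d = 0" and dt: "\<And>c. c \<in> Tc x \<Longrightarrow> A c \<bullet> d = 0"
  shows "\<exists>e>0. \<forall>s. \<bar>s\<bar> \<le> e \<longrightarrow> x + s *\<^sub>R d \<in> H"
proof -
  let ?NT = "Cs - Tc x"
  let ?g = "\<lambda>c. (\<beta> c - A c \<bullet> x) / (\<bar>A c \<bullet> d\<bar> + 1)"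
  have xc: "\<And>c. c \<in> Cs \<Longrightarrow> A c \<bullet> x \<le> \<beta> c" and xs: "ones \<bullet> x = f n" using x by (auto simp: H_def)
  have sl: "A c \<bullet> x < \<beta> c" if "c \<in> ?NT" for c using xc[of c] that by (auto simp: Tc_def)
  define e where "e = Min (insert 1 (?g ` ?NT))"
  have fin: "finite (insert 1 (?g ` ?NT))" by simp
  have gp: "0 < ?g c" if "c \<in> ?NT" for c using sl[OF that] by (intro divide_pos_pos) auto
  have epos: "0 < e" unfolding e_def using fin gp
    by (subst Min_gr_iff) auto
  have ele: "e \<le> ?g c" if "c \<in> ?NT" for c unfolding e_def using fin that by (intro Min_le) auto
  have "\<forall>s. \<bar>s\<bar> \<le> e \<longrightarrow> x + s *\<^sub>R d \<in> H"
  proof (intro allI impI)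
    fix s :: real assume s: "\<bar>s\<bar> \<le> e"
    have "A c \<bullet> (x + s *\<^sub>R d) \<le> \<beta> c" if c: "c \<in> Cs" for c
    proof (cases "c \<in> Tc x")
      case True thus ?thesis using dt[OF True] xc[OF c] by (simp add: inner_add_right)
    next
      case False
      hence cn: "c \<in> ?NT" using c by simp
      define g where "g = \<beta> c - A c \<bullet> x"
      define a where "a = \<bar>A c \<bullet> d\<bar>"
      have gpos: "0 < g" using sl[OF cn] by (simp add: g_def)
      have apos: "0 \<le> a" by (simp add: a_def)
      have 1: "s * (A c \<bullet> d) \<le> \<bar>s\<bar> * a" unfolding a_def by (metis abs_ge_self abs_mult)
      have 2: "\<bar>s\<bar> * a \<le> e * a" using s apos by (intro mult_right_mono) auto
      have 3: "e * a \<le> g / (a + 1) * a" using ele[OF cn] apos unfolding g_def a_def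
        by (intro mult_right_mono) auto
      have 4: "g / (a + 1) * a \<le> g" using gpos apos by (simp add: field_simps)
      have "A c \<bullet> (x + s *\<^sub>R d) = A c \<bullet> x + s * (A c \<bullet> d)" by (simp add: inner_add_right)
      thus ?thesis using 1 2 3 4 unfolding g_def by linarith
    qed
    moreover have "ones \<bullet> (x + s *\<^sub>R d) = f n" using xs d0 by (simp add: inner_add_right)
    ultimately show "x + s *\<^sub>R d \<in> H" by (simp add: H_def)
  qed
  thus ?thesis using epos by blast
qed

lemma not_extreme:
  assumes x: "x \<in> H" and dn: "d \<noteq> 0" and d0: "ones \<bullet> d = 0" and dt: "\<And>c. c \<in> Tc x \<Longrightarrow> A c \<bullet> d = 0"
  shows "\<not> x extreme_point_of H"
proof
  assume ex: "x extreme_point_of H"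
  obtain e where e: "e > 0" "\<forall>s. \<bar>s\<bar> \<le> e \<longrightarrow> x + s *\<^sub>R d \<in> H" using perturb[OF x d0 dt] by blast
  have p1: "x + e *\<^sub>R d \<in> H" using e by auto
  have "\<bar>-e\<bar> \<le> e" using e(1) by simp
  hence p2: "x + (-e) *\<^sub>R d \<in> H" using e(2) by blast
  have mid: "midpoint (x + (-e) *\<^sub>R d) (x + e *\<^sub>R d) = x"
    by (simp add: midpoint_def algebra_simps scaleR_2[symmetric])
  have "x + (-e) *\<^sub>R d \<noteq> x + e *\<^sub>R d"
  proof
    assume "x + (-e) *\<^sub>R d = x + e *\<^sub>R d"
    hence "(-e) *\<^sub>R d = e *\<^sub>R d" by simp
    hence "-e = e" using dn scaleR_cancel_right by blast
    thus False using e(1) by simp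
  qed
  hence "x \<in> open_segment (x + (-e) *\<^sub>R d) (x + e *\<^sub>R d)"
    using midpoint_in_open_segment mid by metis
  thus False using ex p1 p2 unfolding extreme_point_of_def by blast
qed

lemma ones_axis: "ones \<bullet> axis c 1 = 1"
  unfolding ones_def by (simp add: inner_axis)
lemma sum_axis[simp]: "(\<Sum>k\<in>UNIV. axis (c::'m) (1::real) $ k) = 1"
  using ones_axis[of c] by (simp only: ones_inner)
lemma sum_axis_B: "finite B \<Longrightarrow> (\<Sum>k\<in>B. axis (c::'m) (1::real) $ k) = (if c \<in> B then 1 else 0)"
proof -
  assume fB: "finite B"
  have "(\<Sum>k\<in>B. axis c (1::real) $ k) = (\<Sum>k\<in>B. if k = c then 1 else 0)"
    by (rule sum.cong) (auto simp: axis_def)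
  also have "\<dots> = (if c \<in> B then 1 else 0)" using fB by (simp add: sum.delta)
  finally show ?thesis .
qed

lemma extreme_Z: assumes ex: "x extreme_point_of H" shows "Z x = J - \<Union>(T x)"
proof (rule ccontr)
  have x: "x \<in> H" using ex by (simp add: extreme_point_of_def)
  assume "Z x \<noteq> J - \<Union>(T x)"
  moreover have "Z x \<subseteq> J - \<Union>(T x)" using ZU[OF x] by (auto simp: Z_def)
  ultimately obtain c where c: "c \<in> J" "c \<notin> \<Union>(T x)" "c \<notin> Z x" by blast
  define d where "d = axis c (1::real) - axis j 1"
  have cj: "c \<noteq> j" using c(1) by (simp add: inJ)
  have "d$c = 1" using cj by (simp add: d_def axis_def)
  hence dn: "d \<noteq> 0" by auto
  have d0: "ones \<bullet> d = 0" by (simp add: d_def inner_diff_right)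
  have dt: "A c' \<bullet> d = 0" if "c' \<in> Tc x" for c'
  proof -
    from that consider (l) i where "c' = Inl i" "i \<in> Z x" | (r) B where "c' = Inr B" "B \<in> T x"
      unfolding Tc_eq by auto
    thus ?thesis
    proof cases
      case l thus ?thesis using c cj by (auto simp: d_def axis_def Z_def inJ)
    next
      case r
      have "c \<notin> B" "j \<notin> B" using r c T_sub[OF r(2)] by auto
      thus ?thesis using r finsub[OF T_sub[OF r(2)]] by (simp add: d_def sum_subtractf sum_axis_B)
    qed
  qed
  show False using not_extreme[OF x dn d0 dt] ex by blast
qed

lemma extreme_sep: assumes ex: "x extreme_point_of H" and ab: "a \<in> \<Union>(T x)" "b \<in> \<Union>(T x)" "a \<noteq> b"
  shows "\<exists>B\<in>T x. (a \<in> B) \<noteq> (b \<in> B)"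
proof (rule ccontr)
  have x: "x \<in> H" using ex by (simp add: extreme_point_of_def)
  assume "\<not> ?thesis"
  hence sep: "\<And>B. B \<in> T x \<Longrightarrow> (a \<in> B) = (b \<in> B)" by blast
  define d where "d = axis a (1::real) - axis b 1"
  have "d$a = 1" using ab(3) by (simp add: d_def axis_def)
  hence dn: "d \<noteq> 0" by auto
  have d0: "ones \<bullet> d = 0" by (simp add: d_def inner_diff_right)
  have dt: "A c' \<bullet> d = 0" if "c' \<in> Tc x" for c'
  proof -
    from that consider (l) i where "c' = Inl i" "i \<in> Z x" | (r) B where "c' = Inr B" "B \<in> T x"
      unfolding Tc_eq by auto
    thus ?thesis
    proof cases
      case l
      have "i \<noteq> a" "i \<noteq> b" using ZU[OF x] l ab by auto
      thus ?thesis using l by (auto simp: d_def axis_def)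
    next
      case r
      have fB: "finite B" using finsub[OF T_sub[OF r(2)]] .
      show ?thesis using r sep[OF r(2)] fB
        by (simp add: d_def sum_subtractf sum_axis_B)
    qed
  qed
  show False using not_extreme[OF x dn d0 dt] ex by blast
qed

end


context qb
begin

definition phi :: "real^'m \<Rightarrow> 'm \<Rightarrow> 'm set" where
  "phi x a = (SOME B. B \<in> T x \<and> a \<in> B \<and> (\<forall>B'\<in>T x. a \<in> B' \<longrightarrow> card B \<le> card B'))"

lemma phi: assumes "a \<in> \<Union>(T x)"
  shows "phi x a \<in> T x" "a \<in> phi x a" "\<And>B'. B' \<in> T x \<Longrightarrow> a \<in> B' \<Longrightarrow> card (phi x a) \<le> card B'"
proof -
  obtain B0 where B0: "B0 \<in> T x" "a \<in> B0" using assms by auto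
  have "\<exists>B. (B \<in> T x \<and> a \<in> B) \<and> (\<forall>B'. (B' \<in> T x \<and> a \<in> B') \<longrightarrow> card B \<le> card B')"
    using B0 by (intro ex_has_least_nat[where P="\<lambda>B. B \<in> T x \<and> a \<in> B" and m=card]) auto
  hence "\<exists>B. B \<in> T x \<and> a \<in> B \<and> (\<forall>B'\<in>T x. a \<in> B' \<longrightarrow> card B \<le> card B')" by blast
  from someI_ex[OF this]
  have *: "phi x a \<in> T x \<and> a \<in> phi x a \<and> (\<forall>B'\<in>T x. a \<in> B' \<longrightarrow> card (phi x a) \<le> card B')"
    unfolding phi_def .
  thus "phi x a \<in> T x" "a \<in> phi x a" "\<And>B'. B' \<in> T x \<Longrightarrow> a \<in> B' \<Longrightarrow> card (phi x a) \<le> card B'"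
    by auto
qed

lemma finT: "B \<in> T x \<Longrightarrow> finite B" using finsub[OF T_sub] .

lemma phi_sub: assumes x: "x \<in> H" and a: "a \<in> \<Union>(T x)" and B: "B \<in> T x" "a \<in> B"
  shows "phi x a \<subseteq> B"
proof -
  from P2[OF x phi(1)[OF a] B(1)] show ?thesis
  proof
    assume "B \<subseteq> phi x a"
    moreover have "card (phi x a) \<le> card B" using phi(3)[OF a B] .
    ultimately have "B = phi x a" using finT[OF phi(1)[OF a]] card_subset_eq
      by (metis antisym card_mono)
    thus ?thesis by simp
  qed
qed

lemma lset: assumes x: "x \<in> H" and a: "a \<in> \<Union>(T x)" and c: "c \<in> \<Union>(T x)"
  shows "c \<in> phi x a \<longleftrightarrow> card (phi x c) \<le> card (phi x a)"
proof
  assume "c \<in> phi x a"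
  hence "phi x c \<subseteq> phi x a" using phi_sub[OF x c phi(1)[OF a]] by simp
  thus "card (phi x c) \<le> card (phi x a)" using finT[OF phi(1)[OF a]] by (rule card_mono[rotated])
next
  assume le: "card (phi x c) \<le> card (phi x a)"
  from P2[OF x phi(1)[OF c] phi(1)[OF a]] show "c \<in> phi x a"
  proof
    assume "phi x c \<subseteq> phi x a" thus ?thesis using phi(2)[OF c] by auto
  next
    assume s: "phi x a \<subseteq> phi x c"
    moreover have "card (phi x a) \<le> card (phi x c)" using s finT[OF phi(1)[OF c]] by (rule card_mono[rotated])
    ultimately have "phi x a = phi x c" using le finT[OF phi(1)[OF c]] card_subset_eq by (metis antisym)
    thus ?thesis using phi(2)[OF c] by simp
  qed
qed

lemma phi_inj: assumes ex: "x extreme_point_of H" shows "inj_on (phi x) (\<Union>(T x))"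
proof (rule inj_onI, rule ccontr)
  have x: "x \<in> H" using ex by (simp add: extreme_point_of_def)
  fix a b assume a: "a \<in> \<Union>(T x)" and b: "b \<in> \<Union>(T x)" and e: "phi x a = phi x b" and ne: "a \<noteq> b"
  obtain B where B: "B \<in> T x" "(a \<in> B) \<noteq> (b \<in> B)" using extreme_sep[OF ex a b ne] by blast
  show False
  proof (cases "a \<in> B")
    case True
    hence "phi x a \<subseteq> B" using phi_sub[OF x a B(1)] by simp
    thus False using phi(2)[OF b] e B(2) True by auto
  next
    case False
    hence "b \<in> B" using B(2) by simp
    hence "phi x b \<subseteq> B" using phi_sub[OF x b B(1)] by simp
    thus False using phi(2)[OF a] e B(2) False by auto
  qed
qed

lemma ext_cardT: assumes ex: "x extreme_point_of H" shows "card (T x) = card (\<Union>(T x))"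
proof -
  have x: "x \<in> H" using ex by (simp add: extreme_point_of_def)
  have "card (\<Union>(T x)) \<le> card (T x)"
    using phi_inj[OF ex] phi(1) by (intro card_inj_on_le) auto
  thus ?thesis using P3[OF x] by simp
qed

lemma ext_cardTc: assumes ex: "x extreme_point_of H" shows "card (Tc x) = n"
proof -
  have x: "x \<in> H" using ex by (simp add: extreme_point_of_def)
  have "card (Z x) = n - card (\<Union>(T x))"
    using extreme_Z[OF ex] UT_sub[of x] by (simp add: card_Diff_subset finsub cardJ)
  moreover have "card (\<Union>(T x)) \<le> n" using UT_sub by (rule card_le_n)
  ultimately show ?thesis using card_Tc[of x] ext_cardT[OF ex] by simp
qed

lemma ext_cards: assumes ex: "x extreme_point_of H"
  shows "card ` T x = {1..card (\<Union>(T x))}"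
proof -
  have x: "x \<in> H" using ex by (simp add: extreme_point_of_def)
  have inj: "inj_on card (T x)"
  proof (rule inj_onI)
    fix B C assume B: "B \<in> T x" and C: "C \<in> T x" and e: "card B = card C"
    from P2[OF x B C] show "B = C" using e finT[OF B] finT[OF C] card_subset_eq by metis
  qed
  have sub: "card ` T x \<subseteq> {1..card (\<Union>(T x))}"
  proof
    fix k assume "k \<in> card ` T x"
    then obtain B where B: "B \<in> T x" "k = card B" by auto
    have "B \<noteq> {}" using B(1) by (simp add: T_def)
    hence "0 < card B" using finT[OF B(1)] by (simp add: card_gt_0_iff)
    moreover have "card B \<le> card (\<Union>(T x))" using B(1) finsub[OF UT_sub] by (intro card_mono) auto
    ultimately show "k \<in> {1..card (\<Union>(T x))}" using B by auto
  qed
  moreover have "card (card ` T x) = card {1..card (\<Union>(T x))}"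
    using card_image[OF inj] ext_cardT[OF ex] by simp
  ultimately show ?thesis by (intro card_subset_eq) auto
qed

lemma ext_val: assumes ex: "x extreme_point_of H" and a: "a \<in> \<Union>(T x)"
  shows "x$a = real n + 1 - real (card (phi x a))"
proof -
  have x: "x \<in> H" using ex by (simp add: extreme_point_of_def)
  define B where "B = phi x a"
  have BT: "B \<in> T x" and aB: "a \<in> B" using phi[OF a] by (auto simp: B_def)
  have finB: "finite B" using finT[OF BT] .
  have sB: "(\<Sum>k\<in>B. x$k) = f (card B)" using BT by (simp add: T_def)
  have l1: "1 \<le> card B" using finB aB by (metis One_nat_def Suc_leI card_gt_0_iff empty_iff)
  show ?thesis
  proof (cases "card B = 1")
    case True
    hence "B = {a}" using aB by (metis card_1_singletonE singletonD)
    hence "x$a = f 1" using sB by simp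
    thus ?thesis using True by (simp add: B_def f_def)
  next
    case False
    hence l2: "2 \<le> card B" using l1 by simp
    have "card B - 1 \<in> card ` T x"
    proof -
      have "card B \<le> card (\<Union>(T x))" using BT finsub[OF UT_sub] by (intro card_mono) auto
      thus ?thesis using ext_cards[OF ex] l2 by auto
    qed
    then obtain B' where B': "B' \<in> T x" "card B' = card B - 1" by auto
    have "B' \<subseteq> B"
    proof -
      from P2[OF x B'(1) BT] show ?thesis
      proof
        assume "B \<subseteq> B'" hence "card B \<le> card B'" using finT[OF B'(1)] by (rule card_mono[rotated])
        thus ?thesis using B'(2) l2 by simp
      qed
    qed
    moreover have "a \<notin> B'"
    proof
      assume "a \<in> B'"
      hence "card B \<le> card B'" using phi(3)[OF a B'(1)] by (simp add: B_def)
      thus False using B'(2) l2 by simp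
    qed
    ultimately have "B' \<subseteq> B - {a}" by auto
    moreover have "card (B - {a}) = card B - 1" using aB finB by simp
    ultimately have BB: "B' = B - {a}" using B'(2) finB by (metis card_subset_eq finite_Diff)
    have sB': "(\<Sum>k\<in>B - {a}. x$k) = f (card B - 1)" using B' BB by (simp add: T_def)
    have "(\<Sum>k\<in>B. x$k) = x$a + (\<Sum>k\<in>B - {a}. x$k)" using aB finB by (simp add: sum.remove)
    hence "x$a = f (card B) - f (card B - 1)" using sB sB' by linarith
    moreover have "f (card B) = f (card B - 1) + real n - real (card B - 1)"
      using f_Suc[of "card B - 1"] l1 by simp
    ultimately show ?thesis using l1 by (simp add: B_def of_nat_diff)
  qed
qed

end


context qb
begin

lemma fam_eq: "index_family j = (\<lambda>a. {j,a}) ` J \<union> (\<lambda>(a,c). {j,a,c}) ` (SIGMA a:J. J - {a})"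
proof (rule set_eqI, rule iffI)
  fix S assume "S \<in> index_family j"
  then obtain S0 where S: "S = insert j S0" "S0 \<subseteq> UNIV - {j}" "card S0 \<in> {1,2}"
    unfolding index_family_def by blast
  show "S \<in> (\<lambda>a. {j,a}) ` J \<union> (\<lambda>(a,c). {j,a,c}) ` (SIGMA a:J. J - {a})"
  proof (cases "card S0 = 1")
    case True
    then obtain a where a: "S0 = {a}" by (auto simp: card_1_singleton_iff)
    show ?thesis using S a by (intro UnI1 image_eqI[of _ _ a]) (auto simp: J_def)
  next
    case False
    hence "card S0 = 2" using S(3) by auto
    then obtain a c where ac: "S0 = {a,c}" "a \<noteq> c" by (auto simp: card_2_iff)
    show ?thesis using S ac by (intro UnI2 image_eqI[of _ _ "(a,c)"]) (auto simp: J_def)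
  qed
next
  fix S assume "S \<in> (\<lambda>a. {j,a}) ` J \<union> (\<lambda>(a,c). {j,a,c}) ` (SIGMA a:J. J - {a})"
  then consider (1) a where "a \<in> J" "S = {j,a}" | (2) a c where "a \<in> J" "c \<in> J" "a \<noteq> c" "S = {j,a,c}"
    by auto
  thus "S \<in> index_family j"
  proof cases
    case 1 thus ?thesis unfolding index_family_def by (intro CollectI exI[of _ "{a}"]) (auto simp: J_def)
  next
    case 2 thus ?thesis unfolding index_family_def by (intro CollectI exI[of _ "{a,c}"]) (auto simp: J_def)
  qed
qed

lemma fin_fam[simp]: "finite (index_family j)" by (simp add: fam_eq)

lemma split_sum:
  fixes h :: "'m set \<Rightarrow> real"
  shows "(\<Sum>S\<in>index_family j. h S) = (\<Sum>a\<in>J. h {j,a}) + (\<Sum>a\<in>J. \<Sum>c\<in>J-{a}. h {j,a,c}) / 2"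
proof -
  let ?F1 = "(\<lambda>a. {j,a}) ` J" and ?P = "SIGMA a:J. J - {a}"
  define \<phi> where "\<phi> = (\<lambda>(a::'m,c::'m). {j,a,c})"
  let ?F2 = "\<phi> ` ?P"
  have finP: "finite ?P" by auto
  have disj: "?F1 \<inter> ?F2 = {}"
  proof (rule ccontr)
    assume "?F1 \<inter> ?F2 \<noteq> {}"
    then obtain a a' c' where a: "a \<in> J" "a' \<in> J" "c' \<in> J" "a' \<noteq> c'" and eq: "{j,a} = {j,a',c'}"
      by (auto simp: \<phi>_def)
    have "a' \<in> {j,a}" "c' \<in> {j,a}" by (simp_all add: eq)
    thus False using a by (auto simp: inJ)
  qed
  have inj1: "inj_on (\<lambda>a. {j,a}) J"
  proof (rule inj_onI)
    fix a b assume "a \<in> J" "b \<in> J" "{j,a} = {j,b}"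
    moreover have "a \<in> {j,a}" by simp
    ultimately show "a = b" by (auto simp: inJ)
  qed
  have s1: "(\<Sum>S\<in>?F1. h S) = (\<Sum>a\<in>J. h {j,a})" by (simp add: sum.reindex[OF inj1])
  have fiber: "{q \<in> ?P. \<phi> q = \<phi> p} = {p, (snd p, fst p)}" if p: "p \<in> ?P" for p
  proof -
    obtain a c where pc: "p = (a,c)" "a \<in> J" "c \<in> J" "a \<noteq> c" using p by auto
    have "q \<in> {p, (c,a)}" if q: "q \<in> ?P" "\<phi> q = \<phi> p" for q
    proof -
      obtain a' c' where qc: "q = (a',c')" "a' \<in> J" "c' \<in> J" "a' \<noteq> c'" using q(1) by auto
      have eq: "{j,a',c'} = {j,a,c}" using q(2) pc qc by (simp add: \<phi>_def)
      have "a' \<in> {j,a,c}" "c' \<in> {j,a,c}" unfolding eq[symmetric] by simp_all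
      moreover have "a \<in> {j,a',c'}" "c \<in> {j,a',c'}" unfolding eq by simp_all
      ultimately show ?thesis using pc qc by (auto simp: inJ)
    qed
    moreover have "(c,a) \<in> ?P" "\<phi> (c,a) = \<phi> p" using pc by (auto simp: \<phi>_def)
    ultimately show ?thesis using p pc by auto
  qed
  have "(\<Sum>p\<in>?P. h (\<phi> p)) = (\<Sum>S\<in>?F2. \<Sum>q\<in>{q \<in> ?P. \<phi> q = S}. h (\<phi> q))"
    using finP by (rule sum.image_gen)
  also have "\<dots> = (\<Sum>S\<in>?F2. 2 * h S)"
  proof (rule sum.cong[OF refl])
    fix S assume "S \<in> ?F2"
    then obtain p where p: "p \<in> ?P" "S = \<phi> p" by auto
    have ne: "p \<noteq> (snd p, fst p)" using p(1) by (auto simp: prod_eq_iff)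
    have fs: "{q \<in> ?P. \<phi> q = S} = {p, (snd p, fst p)}" using fiber[OF p(1)] p(2) by simp
    have sw: "\<phi> (snd p, fst p) = S" using fiber[OF p(1)] p(2) by blast
    have "(\<Sum>q\<in>{q \<in> ?P. \<phi> q = S}. h (\<phi> q)) = (\<Sum>q\<in>{p, (snd p, fst p)}. h (\<phi> q))"
      by (simp only: fs)
    also have "\<dots> = (\<Sum>q\<in>{p, (snd p, fst p)}. h S)"
      using p(2) sw by (intro sum.cong) auto
    also have "\<dots> = 2 * h S" using ne by simp
    finally show "(\<Sum>q\<in>{q \<in> ?P. \<phi> q = S}. h (\<phi> q)) = 2 * h S" .
  qed
  finally have s2: "(\<Sum>S\<in>?F2. h S) = (\<Sum>p\<in>?P. h (\<phi> p)) / 2"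
    by (simp add: sum_distrib_left[symmetric])
  have s3: "(\<Sum>p\<in>?P. h (\<phi> p)) = (\<Sum>a\<in>J. \<Sum>c\<in>J-{a}. h {j,a,c})"
    by (subst sum.Sigma) (auto simp: \<phi>_def split_beta intro!: sum.cong)
  have "index_family j = ?F1 \<union> ?F2" unfolding fam_eq \<phi>_def ..
  hence "(\<Sum>S\<in>index_family j. h S) = (\<Sum>S\<in>?F1. h S) + (\<Sum>S\<in>?F2. h S)"
    using disj by (simp add: sum.union_disjoint)
  thus ?thesis using s1 s2 s3 by simp
qed

lemma sum_ind: "finite X \<Longrightarrow> (\<Sum>x\<in>X. if P x then 1 else (0::real)) = real (card {x\<in>X. P x})"
  by (simp add: sum.inter_filter[symmetric])

lemma rn1[simp]: "real (n - Suc 0) = real n - 1" using n1 by (cases n) auto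

lemma card_J_minus: assumes a: "a \<in> J" shows "real (card (J - {a})) = real n - 1"
proof -
  have "card (J - {a}) = n - 1" using cardJ a by (simp add: card_Diff_singleton)
  thus ?thesis using n1 by (simp add: of_nat_diff)
qed

lemma cnt_total: "(\<Sum>S\<in>index_family j. (1::real)) = f n"
proof -
  have "(\<Sum>a\<in>J. \<Sum>c\<in>J-{a}. (1::real)) = (\<Sum>a\<in>J. real n - 1)"
    by (intro sum.cong) (auto simp: cardJ rn1)
  also have "\<dots> = real n * (real n - 1)" using cardJ by simp
  finally have e: "(\<Sum>a\<in>J. \<Sum>c\<in>J-{a}. (1::real)) = real n * (real n - 1)" .
  have "(\<Sum>S\<in>index_family j. (1::real)) = real n + real n * (real n - 1) / 2"
    using split_sum[of "\<lambda>_. 1"] e cardJ by simp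
  also have "\<dots> = f n" by (simp add: f_def field_simps)
  finally show ?thesis .
qed

lemma cnt_B:
  assumes B: "B \<subseteq> J" "B \<noteq> {}"
  shows "(\<Sum>S\<in>index_family j. if S \<inter> B = {} then 0 else (1::real)) = f (card B)"
proof -
  have jB: "j \<notin> B" using B by auto
  have finB: "finite B" using finsub[OF B(1)] .
  have cB: "card B \<le> n" using card_le_n[OF B(1)] .
  have s1: "(\<Sum>a\<in>J. if {j,a} \<inter> B = {} then 0 else (1::real)) = real (card B)"
  proof -
    have "(\<Sum>a\<in>J. if {j,a} \<inter> B = {} then 0 else (1::real)) = (\<Sum>a\<in>B. 1)"
      using B jB by (intro sum.mono_neutral_cong_right) auto
    thus ?thesis by simp
  qed
  have inner: "(\<Sum>c\<in>J-{a}. if {j,a,c} \<inter> B = {} then 0 else (1::real)) =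
      (if a \<in> B then real n - 1 else real (card B))" if a: "a \<in> J" for a
  proof (cases "a \<in> B")
    case True
    hence "(\<Sum>c\<in>J-{a}. if {j,a,c} \<inter> B = {} then 0 else (1::real)) = (\<Sum>c\<in>J-{a}. 1)"
      by (intro sum.cong) auto
    thus ?thesis using True card_J_minus[OF a] by simp
  next
    case False
    have "(\<Sum>c\<in>J-{a}. if {j,a,c} \<inter> B = {} then 0 else (1::real)) = (\<Sum>c\<in>B. 1)"
      using B jB False by (intro sum.mono_neutral_cong_right) auto
    thus ?thesis using False by simp
  qed
  have "(\<Sum>a\<in>J. \<Sum>c\<in>J-{a}. if {j,a,c} \<inter> B = {} then 0 else (1::real)) =
        (\<Sum>a\<in>J. if a \<in> B then real n - 1 else real (card B))"
    using inner by (intro sum.cong) auto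
  also have "\<dots> = (\<Sum>a\<in>J - B. if a \<in> B then real n - 1 else real (card B)) +
                   (\<Sum>a\<in>B. if a \<in> B then real n - 1 else real (card B))"
    using B by (intro sum.subset_diff) auto
  also have "\<dots> = (\<Sum>a\<in>J - B. real (card B)) + (\<Sum>a\<in>B. real n - 1)"
    by (intro arg_cong2[where f="(+)"] sum.cong) auto
  also have "\<dots> = (real n - real (card B)) * real (card B) + real (card B) * (real n - 1)"
    using B finB cB cardJ by (simp add: card_Diff_subset of_nat_diff)
  finally have s2: "(\<Sum>a\<in>J. \<Sum>c\<in>J-{a}. if {j,a,c} \<inter> B = {} then 0 else (1::real)) =
     (real n - real (card B)) * real (card B) + real (card B) * (real n - 1)" .
  have "(\<Sum>S\<in>index_family j. if S \<inter> B = {} then 0 else (1::real)) =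
     real (card B) + ((real n - real (card B)) * real (card B) + real (card B) * (real n - 1)) / 2"
    by (subst split_sum) (simp only: s1 s2)
  also have "\<dots> = f (card B)" by (simp add: f_def field_simps)
  finally show ?thesis .
qed

lemma simplex_props:
  fixes S :: "'m set"
  assumes p: "p \<in> simplexS S"
  shows "\<And>k. 0 \<le> p$k" "\<And>k. k \<notin> S \<Longrightarrow> p$k = 0" "(\<Sum>k\<in>UNIV. p$k) = 1"
proof -
  let ?Q = "{p::real^'m. (\<forall>k. 0 \<le> p$k) \<and> (\<forall>k. k \<notin> S \<longrightarrow> p$k = 0) \<and> (\<Sum>k\<in>UNIV. p$k) = 1}"
  have cQ: "convex ?Q"
  proof (rule convexI)
    fix x y :: "real^'m" and u v :: real
    assume x: "x \<in> ?Q" and y: "y \<in> ?Q" and u: "0 \<le> u" and v: "0 \<le> v" and uv: "u + v = 1"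
    have "(\<Sum>k\<in>UNIV. (u *\<^sub>R x + v *\<^sub>R y)$k) = u * (\<Sum>k\<in>UNIV. x$k) + v * (\<Sum>k\<in>UNIV. y$k)"
      by (simp add: sum.distrib sum_distrib_left)
    also have "\<dots> = 1" using x y uv by simp
    finally show "u *\<^sub>R x + v *\<^sub>R y \<in> ?Q" using x y u v by simp
  qed
  have gen: "{axis i 1 | i. i \<in> S} \<subseteq> ?Q"
  proof
    fix q :: "real^'m" assume "q \<in> {axis i 1 | i. i \<in> S}"
    then obtain i where i: "q = axis i 1" "i \<in> S" by auto
    have "\<forall>k. 0 \<le> q$k" using i by (simp add: axis_def)
    moreover have "\<forall>k. k \<notin> S \<longrightarrow> q$k = 0" using i by (auto simp: axis_def)
    moreover have "(\<Sum>k\<in>UNIV. q$k) = 1" using i(1) sum_axis by simp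
    ultimately show "q \<in> ?Q" by simp
  qed
  have sub: "simplexS S \<subseteq> ?Q" unfolding simplexS_def by (intro hull_minimal gen cQ)
  have "p \<in> ?Q" using sub p by (rule subsetD)
  hence pQ: "(\<forall>k. 0 \<le> p$k) \<and> (\<forall>k. k \<notin> S \<longrightarrow> p$k = 0) \<and> (\<Sum>k\<in>UNIV. p$k) = 1"
    by blast
  thus "\<And>k. 0 \<le> p$k" "\<And>k. k \<notin> S \<Longrightarrow> p$k = 0" "(\<Sum>k\<in>UNIV. p$k) = 1" by blast+
qed

lemma axis_in_simplex: "i \<in> S \<Longrightarrow> axis i 1 \<in> simplexS S"
  unfolding simplexS_def by (rule hull_inc) auto

lemma convex_simplexS: "convex (simplexS S)"
  unfolding simplexS_def by simp

lemma Qbar_sub: "Qbar j \<subseteq> H"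
proof
  fix x assume "x \<in> Qbar j"
  then obtain g where x: "x = (\<Sum>S\<in>index_family j. g S)" and g: "\<forall>S\<in>index_family j. g S \<in> simplexS S"
    unfolding Qbar_def minkowski_sum_def by blast
  let ?F = "index_family j"
  have comp: "x$k = (\<Sum>S\<in>?F. g S $ k)" for k using x by simp
  have nn: "0 \<le> x$i" for i unfolding comp using g simplex_props(1) by (intro sum_nonneg) blast
  have total: "(\<Sum>k\<in>UNIV. x$k) = f n"
  proof -
    have "(\<Sum>k\<in>UNIV. x$k) = (\<Sum>S\<in>?F. \<Sum>k\<in>UNIV. g S $ k)" unfolding comp by (rule sum.swap)
    also have "\<dots> = (\<Sum>S\<in>?F. 1)" using g simplex_props(3) by (intro sum.cong) auto
    also have "\<dots> = f n" by (rule cnt_total)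
    finally show ?thesis .
  qed
  have bound: "(\<Sum>k\<in>B. x$k) \<le> f (card B)" if B: "B \<subseteq> J" "B \<noteq> {}" for B
  proof -
    have "(\<Sum>k\<in>B. x$k) = (\<Sum>S\<in>?F. \<Sum>k\<in>B. g S $ k)" unfolding comp by (rule sum.swap)
    also have "\<dots> \<le> (\<Sum>S\<in>?F. if S \<inter> B = {} then 0 else 1)"
    proof (rule sum_mono)
      fix S assume S: "S \<in> ?F"
      have p: "g S \<in> simplexS S" using g S by blast
      show "(\<Sum>k\<in>B. g S $ k) \<le> (if S \<inter> B = {} then 0 else 1)"
      proof (cases "S \<inter> B = {}")
        case True
        hence "(\<Sum>k\<in>B. g S $ k) = 0" using simplex_props(2)[OF p] by (intro sum.neutral) auto
        thus ?thesis using True by simp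
      next
        case False
        have "(\<Sum>k\<in>B. g S $ k) \<le> (\<Sum>k\<in>UNIV. g S $ k)"
          using simplex_props(1)[OF p] by (intro sum_mono2) auto
        thus ?thesis using False simplex_props(3)[OF p] by simp
      qed
    qed
    also have "\<dots> = f (card B)" by (rule cnt_B[OF B])
    finally show ?thesis .
  qed
  show "x \<in> H" using nn total bound by (simp add: H_iff)
qed

lemma convex_Qbar: "convex (Qbar j)"
proof (rule convexI)
  fix x y :: "real^'m" and u v :: real
  assume x: "x \<in> Qbar j" and y: "y \<in> Qbar j" and u: "0 \<le> u" and v: "0 \<le> v" and uv: "u + v = 1"
  obtain g where gx: "x = (\<Sum>S\<in>index_family j. g S)" and g: "\<forall>S\<in>index_family j. g S \<in> simplexS S"
    using x unfolding Qbar_def minkowski_sum_def by blast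
  obtain g' where gy: "y = (\<Sum>S\<in>index_family j. g' S)" and g': "\<forall>S\<in>index_family j. g' S \<in> simplexS S"
    using y unfolding Qbar_def minkowski_sum_def by blast
  have e: "u *\<^sub>R x + v *\<^sub>R y = (\<Sum>S\<in>index_family j. u *\<^sub>R g S + v *\<^sub>R g' S)"
    unfolding gx gy by (simp add: sum.distrib scaleR_sum_right)
  have "\<forall>S\<in>index_family j. u *\<^sub>R g S + v *\<^sub>R g' S \<in> simplexS S"
    using g g' u v uv by (auto intro: convexD[OF convex_simplexS])
  thus "u *\<^sub>R x + v *\<^sub>R y \<in> Qbar j" unfolding Qbar_def minkowski_sum_def e by blast
qed

end


context qb
begin

lemma sum_UNIV_split: "(\<Sum>k\<in>UNIV. x$k) = x$j + (\<Sum>k\<in>J. x$k)"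
  using sum.remove[of UNIV j "\<lambda>k. x$k"] by (simp add: J_def)

lemma decomp:
  fixes r :: "'m \<Rightarrow> nat"
  assumes U: "U \<subseteq> J" and r: "inj_on r U"
    and ya: "\<And>a. a \<in> U \<Longrightarrow> y$a = real n - real (card {c\<in>U. r c < r a})"
    and yz: "\<And>i. i \<in> J - U \<Longrightarrow> y$i = 0"
    and ys: "(\<Sum>k\<in>UNIV. y$k) = f n"
  shows "y \<in> Qbar j"
proof -
  have finU: "finite U" using finsub[OF U] .
  have jU: "j \<notin> U" using U by auto
  define ch where "ch S = (if S \<inter> U = {} then j else arg_min_on r (S \<inter> U))" for S
  have ch_iff: "ch S = k \<longleftrightarrow> k \<in> S \<inter> U \<and> (\<forall>c\<in>S \<inter> U. c \<noteq> k \<longrightarrow> r k < r c)"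
    if k: "k \<in> J" for S k
  proof (cases "S \<inter> U = {}")
    case True
    have kj: "k \<noteq> j" using k by (simp add: inJ)
    thus ?thesis using True by (auto simp: ch_def)
  next
    case False
    define m where "m = arg_min_on r (S \<inter> U)"
    have fin: "finite (S \<inter> U)" using finU by simp
    have m1: "m \<in> S \<inter> U" unfolding m_def using arg_min_if_finite(1)[OF fin False] .
    have m2: "\<not>(\<exists>x\<in>S \<inter> U. r x < r m)" unfolding m_def using arg_min_if_finite(2)[OF fin False] .
    have chm: "ch S = m" using False by (simp add: ch_def m_def)
    show ?thesis
    proof
      assume "ch S = k"
      hence km: "k = m" using chm by simp
      have "r k < r c" if c: "c \<in> S \<inter> U" "c \<noteq> k" for c
      proof -
        have "\<not> r c < r k" using m2 c km by blast
        moreover have "r c \<noteq> r k" using inj_on_eq_iff[OF r] c m1 km by auto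
        ultimately show ?thesis by simp
      qed
      thus "k \<in> S \<inter> U \<and> (\<forall>c\<in>S \<inter> U. c \<noteq> k \<longrightarrow> r k < r c)" using m1 km by blast
    next
      assume h: "k \<in> S \<inter> U \<and> (\<forall>c\<in>S \<inter> U. c \<noteq> k \<longrightarrow> r k < r c)"
      show "ch S = k"
      proof (rule ccontr)
        assume "ch S \<noteq> k"
        hence "m \<noteq> k" using chm by simp
        hence "r k < r m" using h m1 by blast
        thus False using m2 h by blast
      qed
    qed
  qed
  have ch_in: "ch S \<in> S" if S: "S \<in> index_family j" for S
  proof (cases "S \<inter> U = {}")
    case True
    have "j \<in> S" using S unfolding index_family_def by auto
    thus ?thesis using True by (simp add: ch_def)
  next
    case False
    thus ?thesis using arg_min_if_finite(1)[of "S \<inter> U" r] finU by (simp add: ch_def)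
  qed
  define g where "g S = axis (ch S) (1::real)" for S
  define z where "z = (\<Sum>S\<in>index_family j. g S)"
  have zQ: "z \<in> Qbar j" unfolding Qbar_def minkowski_sum_def z_def
    by (intro CollectI exI[of _ g]) (auto simp: g_def intro: axis_in_simplex ch_in)
  have zk: "z$k = (\<Sum>S\<in>index_family j. if ch S = k then 1 else 0)" for k
    unfolding z_def g_def by (auto simp: axis_def intro!: sum.cong)
  have zJ: "z$k = y$k" if k: "k \<in> J" for k
  proof (cases "k \<in> U")
    case False
    have "(\<Sum>S\<in>index_family j. if ch S = k then 1 else (0::real)) = 0"
      using ch_iff[OF k] False by (intro sum.neutral) auto
    thus ?thesis using zk yz k False by simp
  next
    case True
    define Q where "Q c \<longleftrightarrow> c \<notin> U \<or> r k < r c" for c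
    have rne: "r c \<noteq> r k" if "c \<in> U" "c \<noteq> k" for c using inj_on_eq_iff[OF r] that True by auto
    have c2: "ch {j,a} = k \<longleftrightarrow> a = k" if a: "a \<in> J" for a
      using ch_iff[OF k, of "{j,a}"] True jU k by (auto simp: inJ)
    have c3: "ch {j,a,c} = k \<longleftrightarrow> (a = k \<and> Q c) \<or> (c = k \<and> Q a)"
      if a: "a \<in> J" "c \<in> J" "a \<noteq> c" for a c
      using ch_iff[OF k, of "{j,a,c}"] True jU k a by (auto simp: Q_def inJ)
    have e1: "(\<Sum>a\<in>J. if ch {j,a} = k then 1 else (0::real)) = 1"
    proof -
      have "(\<Sum>a\<in>J. if ch {j,a} = k then 1 else (0::real)) = (\<Sum>a\<in>J. if a = k then 1 else 0)"
        using c2 by (intro sum.cong) auto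
      thus ?thesis using k by simp
    qed
    define m where "m = real (card {c\<in>J-{k}. Q c})"
    have inner: "(\<Sum>c\<in>J-{a}. if ch {j,a,c} = k then 1 else (0::real)) =
        (if a = k then m else (if Q a then 1 else 0))" if a: "a \<in> J" for a
    proof (cases "a = k")
      case True
      have "(\<Sum>c\<in>J-{a}. if ch {j,a,c} = k then 1 else (0::real)) = (\<Sum>c\<in>J-{k}. if Q c then 1 else 0)"
        using c3 a True by (intro sum.cong) auto
      also have "\<dots> = m" unfolding m_def by (rule sum_ind) simp
      finally show ?thesis using True by simp
    next
      case False
      have "(\<Sum>c\<in>J-{a}. if ch {j,a,c} = k then 1 else (0::real)) =
            (\<Sum>c\<in>J-{a}. if c = k then (if Q a then 1 else 0) else 0)"
      proof (rule sum.cong[OF refl])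
        fix c assume "c \<in> J - {a}"
        hence cJ: "c \<in> J" "a \<noteq> c" by auto
        show "(if ch {j,a,c} = k then 1 else (0::real)) = (if c = k then (if Q a then 1 else 0) else 0)"
          using c3[OF a cJ] False by simp
      qed
      also have "\<dots> = (if Q a then 1 else 0)" using k False by simp
      finally show ?thesis using False by simp
    qed
    have e2: "(\<Sum>a\<in>J. \<Sum>c\<in>J-{a}. if ch {j,a,c} = k then 1 else (0::real)) = 2 * m"
    proof -
      have "(\<Sum>a\<in>J. \<Sum>c\<in>J-{a}. if ch {j,a,c} = k then 1 else (0::real)) =
            (\<Sum>a\<in>J. if a = k then m else (if Q a then 1 else 0))"
        using inner by (intro sum.cong) auto
      also have "\<dots> = m + (\<Sum>a\<in>J-{k}. if a = k then m else (if Q a then 1 else 0))"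
        using k by (simp add: sum.remove)
      also have "(\<Sum>a\<in>J-{k}. if a = k then m else (if Q a then 1 else 0)) = (\<Sum>a\<in>J-{k}. if Q a then 1 else (0::real))"
        by (intro sum.cong) auto
      also have "\<dots> = m" unfolding m_def by (rule sum_ind) simp
      finally show ?thesis by simp
    qed
    have "z$k = (\<Sum>a\<in>J. if ch {j,a} = k then 1 else (0::real)) +
        (\<Sum>a\<in>J. \<Sum>c\<in>J-{a}. if ch {j,a,c} = k then 1 else (0::real)) / 2"
      unfolding zk by (rule split_sum)
    hence zk2: "z$k = 1 + m" using e1 e2 by simp
    have un: "{c\<in>J-{k}. Q c} \<union> {c\<in>U. r c < r k} = J - {k}"
      using U by (auto simp: Q_def) (metis rne linorder_neqE_nat)
    have disj: "{c\<in>J-{k}. Q c} \<inter> {c\<in>U. r c < r k} = {}"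
      by (auto simp: Q_def)
    have "card {c\<in>J-{k}. Q c} + card {c\<in>U. r c < r k} = card (J - {k})"
      using card_Un_disjoint[of "{c\<in>J-{k}. Q c}" "{c\<in>U. r c < r k}"] un disj finU by simp
    hence "m + real (card {c\<in>U. r c < r k}) = real n - 1"
      using card_J_minus[OF k] unfolding m_def by (metis of_nat_add)
    thus ?thesis using zk2 ya[OF True] by simp
  qed
  have sz: "(\<Sum>k\<in>UNIV. z$k) = f n"
  proof -
    have "(\<Sum>k\<in>UNIV. z$k) = (\<Sum>S\<in>index_family j. \<Sum>k\<in>UNIV. g S $ k)"
      unfolding z_def sum_component by (rule sum.swap)
    also have "\<dots> = (\<Sum>S\<in>index_family j. 1)" by (simp add: g_def)
    also have "\<dots> = f n" by (rule cnt_total)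
    finally show ?thesis .
  qed
  have "(\<Sum>k\<in>J. z$k) = (\<Sum>k\<in>J. y$k)" using zJ by (intro sum.cong) auto
  hence "z$j = y$j" using sz ys sum_UNIV_split[of z] sum_UNIV_split[of y] by linarith
  hence "z = y" using zJ unfolding vec_eq_iff inJ by metis
  thus ?thesis using zQ by simp
qed

lemma ext_in_Qbar: assumes ex: "x extreme_point_of H" shows "x \<in> Qbar j"
proof -
  have x: "x \<in> H" using ex by (simp add: extreme_point_of_def)
  let ?U = "\<Union>(T x)"
  let ?r = "\<lambda>c. card (phi x c)"
  have rinj: "inj_on ?r ?U"
  proof (rule inj_onI)
    fix a c assume a: "a \<in> ?U" and c: "c \<in> ?U" and e: "card (phi x a) = card (phi x c)"
    have "c \<in> phi x a" using lset[OF x a c] e by simp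
    hence s1: "phi x c \<subseteq> phi x a" using phi_sub[OF x c phi(1)[OF a]] by simp
    have "a \<in> phi x c" using lset[OF x c a] e by simp
    hence s2: "phi x a \<subseteq> phi x c" using phi_sub[OF x a phi(1)[OF c]] by simp
    from s1 s2 have "phi x a = phi x c" by auto
    thus "a = c" using inj_onD[OF phi_inj[OF ex]] a c by blast
  qed
  show ?thesis
  proof (rule decomp[where U="?U" and r="?r" and y=x, OF UT_sub rinj])
    fix a assume a: "a \<in> ?U"
    have "{c\<in>?U. ?r c < ?r a} = phi x a - {a}"
    proof (rule set_eqI, rule iffI)
      fix c assume c: "c \<in> {c\<in>?U. ?r c < ?r a}"
      hence "c \<in> phi x a" using lset[OF x a] by auto
      thus "c \<in> phi x a - {a}" using c by auto
    next
      fix c assume c: "c \<in> phi x a - {a}"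
      have cU: "c \<in> ?U" using c phi(1)[OF a] by auto
      have "?r c \<le> ?r a" using lset[OF x a cU] c by simp
      moreover have "?r c \<noteq> ?r a" using inj_on_eq_iff[OF rinj cU a] c by simp
      ultimately show "c \<in> {c\<in>?U. ?r c < ?r a}" using cU by simp
    qed
    moreover have "finite (phi x a)" using finT[OF phi(1)[OF a]] .
    ultimately have "card {c\<in>?U. ?r c < ?r a} = card (phi x a) - 1" using phi(2)[OF a] by simp
    moreover have "1 \<le> card (phi x a)" using phi(2)[OF a] finT[OF phi(1)[OF a]]
      by (metis One_nat_def Suc_leI card_gt_0_iff empty_iff)
    ultimately show "x$a = real n - real (card {c\<in>?U. ?r c < ?r a})"
      using ext_val[OF ex a] by (simp add: of_nat_diff)
  next
    fix i assume "i \<in> J - ?U" thus "x$i = 0" using extreme_Z[OF ex] by (auto simp: Z_def)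
  next
    show "(\<Sum>k\<in>UNIV. x$k) = f n" using H_sum[OF x] .
  qed
qed

lemma H_eq: "H = {x. ones \<bullet> x = f n} \<inter> \<Inter>((\<lambda>c. {x. A c \<bullet> x \<le> \<beta> c}) ` Cs)"
  unfolding H_def by blast

lemma polyhedron_H: "polyhedron H"
  unfolding H_eq by (intro polyhedron_Int polyhedron_Inter polyhedron_hyperplane) (auto intro: polyhedron_halfspace_le)

lemma Jne: "J \<noteq> {}" using cardJ n1 by auto

lemma bounded_H: "bounded H"
proof -
  have "H \<subseteq> cbox 0 (\<chi> k. f n)"
  proof
    fix x assume x: "x \<in> H"
    have "0 \<le> x$k \<and> x$k \<le> f n" for k
    proof (cases "k = j")
      case True
      have "(\<Sum>k\<in>J. x$k) \<le> f n" using H_le[OF x _ Jne] cardJ by simp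
      moreover have "0 \<le> (\<Sum>k\<in>J. x$k)" using H_nonneg[OF x] by (intro sum_nonneg) auto
      ultimately show ?thesis using H_sum[OF x] sum_UNIV_split[of x] unfolding True by linarith
    next
      case False
      hence kJ: "k \<in> J" by (simp add: inJ)
      have "x$k \<le> f 1" using H_le[OF x, of "{k}"] kJ by simp
      moreover have "f 1 \<le> f n" using n1 by (intro f_mono) auto
      ultimately show ?thesis using H_nonneg[OF x kJ] by simp
    qed
    thus "x \<in> cbox 0 (\<chi> k. f n)" by (simp add: mem_box_cart)
  qed
  thus ?thesis using bounded_cbox bounded_subset by blast
qed

lemma polytope_H: "polytope H"
  using polyhedron_H bounded_H polytope_eq_bounded_polyhedron by blast

lemma Qbar_eq: "Qbar j = H"
proof
  show "Qbar j \<subseteq> H" by (rule Qbar_sub)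
next
  have "H = convex hull {x. x extreme_point_of H}"
    using polytope_H by (intro Krein_Milman_Minkowski polytope_imp_compact polytope_imp_convex)
  also have "\<dots> \<subseteq> Qbar j"
    by (intro hull_minimal convex_Qbar) (auto intro: ext_in_Qbar)
  finally show "H \<subseteq> Qbar j" .
qed

end


context qb
begin

definition x0 :: "real^'m" where "x0 = (\<chi> k. if k = j then f n - real n / 2 else 1/2)"

lemma x0_strict: assumes c: "c \<in> Cs" shows "A c \<bullet> x0 < \<beta> c"
proof -
  from c consider (l) i where "c = Inl i" "i \<in> J" | (r) B where "c = Inr B" "B \<subseteq> J" "B \<noteq> {}"
    by (auto simp: Cs_def)
  thus ?thesis
  proof cases
    case l thus ?thesis by (simp add: x0_def inJ)
  next
    case r
    have "(\<Sum>k\<in>B. x0$k) = (\<Sum>k\<in>B. 1/2)" using r by (intro sum.cong) (auto simp: x0_def)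
    hence "(\<Sum>k\<in>B. x0$k) = real (card B) / 2" by simp
    moreover have "real (card B) \<le> f (card B)" using card_le_n[OF r(2)] by (rule f_ge)
    moreover have "0 < card B" using r finsub[OF r(2)] by (simp add: card_gt_0_iff)
    ultimately show ?thesis using r by simp
  qed
qed

lemma x0_H: "x0 \<in> H"
proof -
  have "(\<Sum>k\<in>J. x0$k) = (\<Sum>k\<in>J. 1/2)" by (intro sum.cong) (auto simp: x0_def inJ)
  hence "(\<Sum>k\<in>J. x0$k) = real n / 2" using cardJ by simp
  moreover have "x0$j = f n - real n / 2" by (simp add: x0_def)
  ultimately have "(\<Sum>k\<in>UNIV. x0$k) = f n" using sum_UNIV_split[of x0] by simp
  thus ?thesis using x0_strict unfolding H_def by (auto intro: less_imp_le)
qed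

lemma Tc_x0: "Tc x0 = {}" using x0_strict by (fastforce simp: Tc_def)

lemma aff_H: "affine hull H = {x. ones \<bullet> x = f n}"
proof
  show "affine hull H \<subseteq> {x. ones \<bullet> x = f n}"
    by (intro hull_minimal affine_hyperplane) (auto simp: H_def simp del: ones_inner)
next
  show "{x. ones \<bullet> x = f n} \<subseteq> affine hull H"
  proof
    fix p assume p: "p \<in> {x. ones \<bullet> x = f n}"
    define d where "d = p - x0"
    have "ones \<bullet> x0 = f n" using x0_H by (simp add: H_def del: ones_inner)
    hence d0: "ones \<bullet> d = 0" using p by (simp add: d_def inner_diff_right del: ones_inner)
    obtain e where e: "e > 0" "\<forall>s. \<bar>s\<bar> \<le> e \<longrightarrow> x0 + s *\<^sub>R d \<in> H"
      using perturb[OF x0_H d0] Tc_x0 by auto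
    let ?q = "x0 + e *\<^sub>R d"
    have q: "?q \<in> H" using e by auto
    have "(1 - 1/e) *\<^sub>R x0 + (1/e) *\<^sub>R ?q = x0 + d"
      using e(1) by (simp add: algebra_simps)
    hence eqp: "p = (1 - 1/e) *\<^sub>R x0 + (1/e) *\<^sub>R ?q" by (simp add: d_def)
    have "(1 - 1/e) *\<^sub>R x0 + (1/e) *\<^sub>R ?q \<in> affine hull H"
      by (intro mem_affine[OF affine_affine_hull] hull_inc x0_H q) simp
    thus "p \<in> affine hull H" using eqp by simp
  qed
qed

lemma ones_nz: "ones \<noteq> 0" by (simp add: ones_def vec_eq_iff)

lemma aff_dim_H: "aff_dim H = int n"
proof -
  have "aff_dim H = aff_dim (affine hull H)" by simp
  also have "\<dots> = aff_dim {x. ones \<bullet> x = f n}" by (simp only: aff_H)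
  also have "\<dots> = int n" using aff_dim_hyperplane[OF ones_nz, of "f n"] cardm by (simp del: ones_inner)
  finally show ?thesis .
qed

definition lift :: "real^'m \<Rightarrow> real^'m" where
  "lift y = (\<chi> k. if k = j then f n - (\<Sum>i\<in>J. y$i) else y$k)"

lemma lift_J: "i \<noteq> j \<Longrightarrow> lift y $ i = y$i" by (simp add: lift_def)

lemma lift_sum: "ones \<bullet> lift y = f n"
proof -
  have "(\<Sum>i\<in>J. lift y $ i) = (\<Sum>i\<in>J. y$i)" by (intro sum.cong) (auto simp: lift_J inJ)
  moreover have "lift y $ j = f n - (\<Sum>i\<in>J. y$i)" by (simp add: lift_def)
  ultimately show ?thesis using sum_UNIV_split[of "lift y"] by simp
qed

lemma witness: assumes c: "c \<in> Cs"
  shows "\<exists>z. ones \<bullet> z = f n \<and> \<beta> c < A c \<bullet> z \<and> (\<forall>c'\<in>Cs. c' \<noteq> c \<longrightarrow> A c' \<bullet> z \<le> \<beta> c')"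
proof -
  from c consider (l) i where "c = Inl i" "i \<in> J" | (r) B where "c = Inr B" "B \<subseteq> J" "B \<noteq> {}"
    by (auto simp: Cs_def)
  thus ?thesis
  proof cases
    case l
    define z where "z = lift (- axis i (1::real))"
    have zi: "z$k = (if k = i then -1 else 0)" if "k \<in> J" for k
      using that by (simp add: z_def lift_J inJ axis_def)
    have "A c' \<bullet> z \<le> \<beta> c'" if c': "c' \<in> Cs" "c' \<noteq> c" for c'
    proof -
      from c' consider (l') i' where "c' = Inl i'" "i' \<in> J" "i' \<noteq> i"
        | (r') B where "c' = Inr B" "B \<subseteq> J" "B \<noteq> {}" using l by (auto simp: Cs_def)
      thus ?thesis
      proof cases
        case l' thus ?thesis using zi by simp
      next
        case r'
        have "(\<Sum>k\<in>B. z$k) = (\<Sum>k\<in>B. if k = i then -1 else 0)" using zi r' by (intro sum.cong) auto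
        also have "\<dots> \<le> 0" by (intro sum_nonpos) auto
        finally show ?thesis using r' f_nonneg[OF card_le_n[OF r'(2)]] by simp
      qed
    qed
    moreover have "\<beta> c < A c \<bullet> z" using l zi by simp
    moreover have "ones \<bullet> z = f n" unfolding z_def by (rule lift_sum)
    ultimately show ?thesis by blast
  next
    case r
    define b where "b = card B"
    have finB: "finite B" using finsub[OF r(2)] .
    have b1: "1 \<le> b" using r finB by (simp add: b_def Suc_le_eq card_gt_0_iff)
    have bn: "b \<le> n" using card_le_n[OF r(2)] by (simp add: b_def)
    have rn: "1 \<le> real n" using n1 by simp
    define t where "t = (2 * real n + 1 - real b) / 2 + 1 / (4 * real n)"
    define z where "z = lift (t *\<^sub>R ind B)"
    have zk: "z$k = (if k \<in> B then t else 0)" if "k \<in> J" for k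
      using that by (simp add: z_def lift_J inJ ind_def)
    have sC: "(\<Sum>k\<in>C. z$k) = t * real (card (C \<inter> B))" if C: "C \<subseteq> J" for C
    proof -
      have "(\<Sum>k\<in>C. z$k) = (\<Sum>k\<in>C. if k \<in> B then t else 0)" using zk C by (intro sum.cong) auto
      also have "\<dots> = (\<Sum>k\<in>C \<inter> B. t)" using finsub[OF C] by (intro sum.mono_neutral_cong_right) auto
      also have "\<dots> = t * real (card (C \<inter> B))" by simp
      finally show ?thesis .
    qed
    have t1: "0 < (2 * real n + 1 - real b) / 2" using bn by simp
    have t2: "0 < 1 / (4 * real n)" using rn by simp
    have tpos: "0 < t" unfolding t_def using t1 t2 by linarith
    have tb: "t * real b = f b + real b / (4 * real n)"
      by (simp add: t_def f_def field_simps)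
    have tw: "t * real w \<le> f w" if w: "w < b" for w
    proof -
      have e: "f w - t * real w = real w * ((real b - real w) / 2 - 1 / (4 * real n))"
        by (simp add: t_def f_def field_simps)
      have "1 / (4 * real n) \<le> 1 / 4" using rn by (simp add: divide_le_eq)
      moreover have "1 \<le> real b - real w" using w by simp
      ultimately have "0 \<le> (real b - real w) / 2 - 1 / (4 * real n)" by simp
      hence "0 \<le> real w * ((real b - real w) / 2 - 1 / (4 * real n))" by simp
      thus ?thesis using e by simp
    qed
    have bq: "real b / (4 * real n) \<le> 1" using bn rn by (simp add: divide_le_eq)
    have "A c' \<bullet> z \<le> \<beta> c'" if c': "c' \<in> Cs" "c' \<noteq> c" for c'
    proof -
      from c' consider (l') i' where "c' = Inl i'" "i' \<in> J"
        | (r') C where "c' = Inr C" "C \<subseteq> J" "C \<noteq> {}" "C \<noteq> B" using r by (auto simp: Cs_def)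
      thus ?thesis
      proof cases
        case l' thus ?thesis using zk tpos by simp
      next
        case r'
        have finC: "finite C" using finsub[OF r'(2)] .
        have cC: "card C \<le> n" using card_le_n[OF r'(2)] .
        show ?thesis
        proof (cases "B \<subseteq> C")
          case True
          hence CB: "C \<inter> B = B" by auto
          have BC: "B \<subset> C" using True r'(4) by auto
          have "b < card C" unfolding b_def using psubset_card_mono[OF finC BC] .
          hence "Suc b \<le> card C" by simp
          hence "f (Suc b) \<le> f (card C)" using cC by (rule f_mono)
          moreover have "f (Suc b) = f b + real n - real b" by (rule f_Suc)
          moreover have "real b + 1 \<le> real n" using \<open>b < card C\<close> cC by simp
          ultimately have "t * real b \<le> f (card C)" using tb bq by linarith
          thus ?thesis using r' sC[OF r'(2)] CB by (simp add: b_def)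
        next
          case False
          hence CB: "C \<inter> B \<subset> B" by auto
          have w: "card (C \<inter> B) < b" unfolding b_def using psubset_card_mono[OF finB CB] .
          have "card (C \<inter> B) \<le> card C" using finC by (intro card_mono) auto
          hence "f (card (C \<inter> B)) \<le> f (card C)" using cC by (rule f_mono)
          thus ?thesis using tw[OF w] r' sC[OF r'(2)] by simp
        qed
      qed
    qed
    moreover have "\<beta> c < A c \<bullet> z"
    proof -
      have "A c \<bullet> z = t * real b" using r sC[OF r(2)] by (simp add: b_def)
      moreover have "0 < real b / (4 * real n)" using b1 rn by simp
      ultimately show ?thesis using tb r by (simp add: b_def)
    qed
    moreover have "ones \<bullet> z = f n" unfolding z_def by (rule lift_sum)
    ultimately show ?thesis by blast
  qed
qed

definition wit :: "('m + 'm set) \<Rightarrow> real^'m" where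
  "wit c = (SOME z. ones \<bullet> z = f n \<and> \<beta> c < A c \<bullet> z \<and> (\<forall>c'\<in>Cs. c' \<noteq> c \<longrightarrow> A c' \<bullet> z \<le> \<beta> c'))"

lemma wit: assumes "c \<in> Cs"
  shows "ones \<bullet> wit c = f n" "\<beta> c < A c \<bullet> wit c" "\<And>c'. c' \<in> Cs \<Longrightarrow> c' \<noteq> c \<Longrightarrow> A c' \<bullet> wit c \<le> \<beta> c'"
  using someI_ex[OF witness[OF assms]] unfolding wit_def[symmetric] by (simp_all del: ones_inner)

definition hs :: "('m + 'm set) \<Rightarrow> (real^'m) set" where "hs c = {x. A c \<bullet> x \<le> \<beta> c}"
definition hyp :: "('m + 'm set) \<Rightarrow> (real^'m) set" where "hyp c = {x. A c \<bullet> x = \<beta> c}"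

lemma hs_inj: "inj_on hs Cs"
proof (rule inj_onI, rule ccontr)
  fix c c' assume c: "c \<in> Cs" "c' \<in> Cs" "hs c = hs c'" "c \<noteq> c'"
  have "wit c \<notin> hs c" using wit(2)[OF c(1)] by (simp add: hs_def)
  moreover have "wit c \<in> hs c'" using wit(3)[OF c(1) c(2)] c(4) by (simp add: hs_def)
  ultimately show False using c(3) by simp
qed

lemma A_nz: assumes "c \<in> Cs" shows "A c \<noteq> 0"
proof
  assume "A c = 0"
  thus False using x0_strict[OF assms] wit(2)[OF assms] by simp
qed

lemma facet_iff: "C facet_of H \<longleftrightarrow> (\<exists>c\<in>Cs. C = H \<inter> hyp c)"
proof -
  let ?F = "hs ` Cs"
  define a where "a h = A (inv_into Cs hs h)" for h
  define b where "b h = \<beta> (inv_into Cs hs h)" for h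
  have ab: "a (hs c) = A c" "b (hs c) = \<beta> c" if "c \<in> Cs" for c
    using inv_into_f_f[OF hs_inj that] by (simp_all add: a_def b_def)
  have fin: "finite ?F" by simp
  have seq: "H = affine hull H \<inter> \<Inter>?F" unfolding aff_H hs_def by (rule H_eq)
  have faceq: "a h \<noteq> 0 \<and> h = {x. a h \<bullet> x \<le> b h}" if hF: "h \<in> ?F" for h
  proof -
    obtain c where c: "c \<in> Cs" "h = hs c" using hF by auto
    show ?thesis using ab[OF c(1)] A_nz[OF c(1)] c by (simp add: hs_def)
  qed
  have psub: "H \<subset> affine hull H \<inter> \<Inter>F'" if F': "F' \<subset> ?F" for F'
  proof -
    obtain h where h: "h \<in> ?F" "h \<notin> F'" using F' by blast
    obtain c where c: "c \<in> Cs" "h = hs c" using h(1) by auto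
    have "wit c \<in> affine hull H" unfolding aff_H using wit(1)[OF c(1)] by simp
    moreover have "wit c \<in> \<Inter>F'"
    proof
      fix h' assume h': "h' \<in> F'"
      then obtain c' where c': "c' \<in> Cs" "h' = hs c'" using F' by blast
      have "c' \<noteq> c" using h' h(2) c c' by auto
      thus "wit c \<in> h'" using wit(3)[OF c(1) c'(1)] c' by (simp add: hs_def)
    qed
    moreover have "\<not> A c \<bullet> wit c \<le> \<beta> c" using wit(2)[OF c(1)] by simp
    hence "wit c \<notin> H" using c(1) unfolding H_def by blast
    moreover have "H \<subseteq> affine hull H \<inter> \<Inter>F'" using seq F' by blast
    ultimately show ?thesis by blast
  qed
  have "C facet_of H \<longleftrightarrow> (\<exists>h. h \<in> ?F \<and> C = H \<inter> {x. a h \<bullet> x = b h})"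
    by (rule facet_of_polyhedron_explicit[OF fin seq faceq psub])
  also have "\<dots> \<longleftrightarrow> (\<exists>c\<in>Cs. C = H \<inter> hyp c)" using ab by (auto simp: hyp_def)
  finally show ?thesis .
qed

lemma facet_inj: assumes c: "c \<in> Cs" "c' \<in> Cs" "c \<noteq> c'" shows "H \<inter> hyp c \<noteq> H \<inter> hyp c'"
proof -
  let ?z = "wit c"
  define u where "u = A c \<bullet> x0"
  define v where "v = A c \<bullet> ?z"
  have uv: "u < \<beta> c" "\<beta> c < v" using x0_strict[OF c(1)] wit(2)[OF c(1)] by (simp_all add: u_def v_def)
  define t where "t = (\<beta> c - u) / (v - u)"
  have t0: "0 < t" using uv by (simp add: t_def)
  have t1: "t < 1" using uv by (simp add: t_def divide_less_eq)
  define p where "p = x0 + t *\<^sub>R (?z - x0)"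
  have lin: "w \<bullet> p = (1 - t) * (w \<bullet> x0) + t * (w \<bullet> ?z)" for w
    by (simp add: p_def inner_add_right inner_diff_right algebra_simps)
  have pc: "A c \<bullet> p = \<beta> c"
  proof -
    have "A c \<bullet> p = u + t * (v - u)" using lin[of "A c"] by (simp add: u_def v_def algebra_simps)
    also have "\<dots> = \<beta> c" using uv by (simp add: t_def)
    finally show ?thesis .
  qed
  have pd: "A d \<bullet> p < \<beta> d" if d: "d \<in> Cs" "d \<noteq> c" for d
  proof -
    have "(1 - t) * (A d \<bullet> x0) < (1 - t) * \<beta> d" using t1 x0_strict[OF d(1)] by simp
    moreover have "t * (A d \<bullet> ?z) \<le> t * \<beta> d" using t0 wit(3)[OF c(1) d] by (simp add: mult_left_mono)
    ultimately show ?thesis using lin[of "A d"] by (simp add: algebra_simps)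
  qed
  have "ones \<bullet> p = f n" using lin[of ones] wit(1)[OF c(1)] x0_H
    by (simp add: H_def algebra_simps del: ones_inner)
  moreover have "\<forall>d\<in>Cs. A d \<bullet> p \<le> \<beta> d"
  proof
    fix d assume d: "d \<in> Cs"
    show "A d \<bullet> p \<le> \<beta> d" using pc pd[OF d] by (cases "d = c") auto
  qed
  ultimately have pH: "p \<in> H" unfolding H_def by (simp del: ones_inner)
  have "p \<in> H \<inter> hyp c" using pH pc by (simp add: hyp_def)
  moreover have "p \<notin> H \<inter> hyp c'" using pd[OF c(2)] c(3) by (simp add: hyp_def)
  ultimately show ?thesis by blast
qed

lemma vertex_count: assumes v: "{v} face_of H" shows "card {F. F facet_of H \<and> v \<in> F} = n"
proof -
  have ex: "v extreme_point_of H" using v face_of_singleton by blast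
  have vH: "v \<in> H" using ex by (simp add: extreme_point_of_def)
  have eq: "{F. F facet_of H \<and> v \<in> F} = (\<lambda>c. H \<inter> hyp c) ` Tc v"
  proof (rule set_eqI, rule iffI)
    fix F assume "F \<in> {F. F facet_of H \<and> v \<in> F}"
    then obtain c where c: "c \<in> Cs" "F = H \<inter> hyp c" and vF: "v \<in> F" using facet_iff by auto
    hence "c \<in> Tc v" by (auto simp: Tc_def hyp_def)
    thus "F \<in> (\<lambda>c. H \<inter> hyp c) ` Tc v" using c by auto
  next
    fix F assume "F \<in> (\<lambda>c. H \<inter> hyp c) ` Tc v"
    then obtain c where c: "c \<in> Tc v" "F = H \<inter> hyp c" by auto
    have "F facet_of H" using facet_iff c by (auto simp: Tc_def)
    moreover have "v \<in> F" using c vH by (auto simp: Tc_def hyp_def)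
    ultimately show "F \<in> {F. F facet_of H \<and> v \<in> F}" by simp
  qed
  have inj: "inj_on (\<lambda>c. H \<inter> hyp c) (Tc v)" using facet_inj by (auto simp: inj_on_def Tc_def)
  show ?thesis unfolding eq card_image[OF inj] using ext_cardTc[OF ex] .
qed

end

theorem mainTheorem11:
  fixes n :: nat and j :: "'m::finite"
  assumes "n \<ge> 1" and "CARD('m) = n + 1"
  shows "polytope (Qbar j) \<and> aff_dim (Qbar j) = int n \<and> simple_polytope (Qbar j)"
proof -
  interpret qb j n by unfold_locales (use assms in auto)
  have P: "polytope (Qbar j)" using polytope_H Qbar_eq by simp
  have D: "aff_dim (Qbar j) = int n" using aff_dim_H Qbar_eq by simp
  have S: "simple_polytope (Qbar j)" unfolding simple_polytope_def using P D vertex_count Qbar_eq by auto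
  show ?thesis using P D S by blast
qed


end
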